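(* Let $G$ be a nilpotent Lie group of dimension $2n$ with a left-invariant $\mathrm{SL}(n,\mathbb{R})$-structure whose underlying almost paracomplex structure is integrable (paracomplex). Then its associated one-forms satisfy \[\lambda=\frac{n-1}{n}\,(f_8-f_4).\]
   Context: An $\mathrm{SL}(n,\mathbb{R})$-structure on a $2n$-manifold is a splitting $TM=V\oplus H$ into rank-$n$ distributions, $K=\mathrm{id}_V-\mathrm{id}_H$, a neutral metric $g$ with $g(KX,KY)=-g(X,Y)$, and forms $F,\alpha,\beta$ such that locally there are coframes $e^1,\dots,e^{2n}$ with $V=\{e^{n+1}=\dots=e^{2n}=0\}$, $H=\{e^1=\dots=e^n=0\}$, $g=\sum_i(e^i\otimes e^{n+i}+e^{n+i}\otimes e^i)$, $F=\sum_ie^i\wedge e^{n+i}$, $\alpha=e^1\wedge\dots\wedge e^n$, $\beta=e^{n+1}\wedge\dots\wedge e^{2n}$; $(e_I)$ is the dual frame. It is paracomplex if $V$ and $H$ are integrable. Forms split by type $\Lambda^{p,q}$ ($p$ factors among $e^1,\dots,e^n$, $q$ among $e^{n+1},\dots,e^{2n}$). The one-form $\lambda$ is $\lambda(X)=\frac1n\sum_{i=1}^ng(\nabla_Xe_i,e_{n+i})$, $\nabla$ the Levi-Civita connection. For $\gamma\in\Lambda^{2,1}\oplus\Lambda^{1,2}$ set $\Lambda(\gamma)=-\frac1{n-1}\sum_{i=1}^n e_i\lrcorner(e_{n+i}\lrcorner\gamma)$, and define $f_4=-\frac12\Lambda\big((dF)^{1,2}\big)\in\Lambda^{0,1}$ and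 $f_8=-\frac12\Lambda\big((dF)^{2,1}\big)\in\Lambda^{1,0}$. *)

theory Defs
  imports Complex_Main
begin

text \<open>Left-invariant objects on a Lie group of dimension N = 2n are encoded on its Lie
algebra, with respect to a left-invariant adapted frame e_0,...,e_{N-1}
(e_0..e_{n-1} span V, e_n..e_{2n-1} span H).  The Lie algebra is given by structure
constants: [e_i, e_j] = sum_k c i j k e_k.  Vectors are functions nat => real,
the components with index >= N being irrelevant.\<close>

definition basis_vec :: "nat \<Rightarrow> nat \<Rightarrow> real" where
  "basis_vec a = (\<lambda>k. if k = a then 1 else 0)"

definition lie_br :: "nat \<Rightarrow> (nat \<Rightarrow> nat \<Rightarrow> nat \<Rightarrow> real) \<Rightarrow> (nat \<Rightarrow> real) \<Rightarrow> (nat \<Rightarrow> real) \<Rightarrow> (nat \<Rightarrow> real)" where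
  "lie_br N c x y = (\<lambda>k. if k < N then (\<Sum>i<N. \<Sum>j<N. x i * y j * c i j k) else 0)"

definition is_lie_algebra :: "nat \<Rightarrow> (nat \<Rightarrow> nat \<Rightarrow> nat \<Rightarrow> real) \<Rightarrow> bool" where
  "is_lie_algebra N c \<longleftrightarrow>
     (\<forall>i<N. \<forall>j<N. \<forall>k<N. c i j k = - c j i k) \<and>
     (\<forall>i<N. \<forall>j<N. \<forall>k<N. \<forall>m<N.
        (\<Sum>l<N. c i j l * c l k m + c j k l * c l i m + c k i l * c l j m) = 0)"

fun iter_br :: "nat \<Rightarrow> (nat \<Rightarrow> nat \<Rightarrow> nat \<Rightarrow> real) \<Rightarrow> (nat \<Rightarrow> real) list \<Rightarrow> (nat \<Rightarrow> real)" where
  "iter_br N c [] = (\<lambda>_. 0)"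
| "iter_br N c [x] = x"
| "iter_br N c (x # xs) = lie_br N c x (iter_br N c xs)"

text \<open>Nilpotent: the lower central series reaches 0, i.e. for some m all iterated
brackets [x_1,[x_2,...,[x_{m-1},x_m]...]] vanish (they span g^{(m)}).\<close>
definition nilpotent_lie :: "nat \<Rightarrow> (nat \<Rightarrow> nat \<Rightarrow> nat \<Rightarrow> real) \<Rightarrow> bool" where
  "nilpotent_lie N c \<longleftrightarrow> (\<exists>m\<ge>1. \<forall>xs. length xs = m \<and> (\<forall>x\<in>set xs. \<forall>k\<ge>N. x k = 0)
        \<longrightarrow> (\<forall>k<N. iter_br N c xs k = 0))"

text \<open>Integrability of V and H (left-invariant distributions): they are subalgebras.\<close>
definition paracomplex_sc :: "nat \<Rightarrow> (nat \<Rightarrow> nat \<Rightarrow> nat \<Rightarrow> real) \<Rightarrow> bool" where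
  "paracomplex_sc n c \<longleftrightarrow>
     (\<forall>i<n. \<forall>j<n. \<forall>k. n \<le> k \<and> k < 2*n \<longrightarrow> c i j k = 0) \<and>
     (\<forall>i j k. n \<le> i \<and> i < 2*n \<and> n \<le> j \<and> j < 2*n \<and> k < n \<longrightarrow> c i j k = 0)"

definition slmetric :: "nat \<Rightarrow> nat \<Rightarrow> nat \<Rightarrow> real" where
  "slmetric n a b = (if (a < n \<and> b = a + n) \<or> (b < n \<and> a = b + n) then 1 else 0)"

definition gvec :: "nat \<Rightarrow> (nat \<Rightarrow> real) \<Rightarrow> (nat \<Rightarrow> real) \<Rightarrow> real" where
  "gvec n x y = (\<Sum>a<2*n. \<Sum>b<2*n. x a * y b * slmetric n a b)"

text \<open>Levi-Civita connection on left-invariant fields: Gamma a b d = g(nabla_{e_a} e_b, e_d),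
the unique such coefficients with torsion zero and metric compatibility
(for left-invariant fields, X(g(Y,Z)) = 0).\<close>
definition levi_civita :: "nat \<Rightarrow> (nat \<Rightarrow> nat \<Rightarrow> nat \<Rightarrow> real) \<Rightarrow> nat \<Rightarrow> nat \<Rightarrow> nat \<Rightarrow> real" where
  "levi_civita n c = (THE \<Gamma>.
     (\<forall>a<2*n. \<forall>b<2*n. \<forall>d<2*n.
        \<Gamma> a b d - \<Gamma> b a d = gvec n (lie_br (2*n) c (basis_vec a) (basis_vec b)) (basis_vec d)
        \<and> \<Gamma> a b d + \<Gamma> a d b = 0) \<and>
     (\<forall>a b d. \<not> (a < 2*n \<and> b < 2*n \<and> d < 2*n) \<longrightarrow> \<Gamma> a b d = 0))"

definition lambda_form :: "nat \<Rightarrow> (nat \<Rightarrow> nat \<Rightarrow> nat \<Rightarrow> real) \<Rightarrow> nat \<Rightarrow> real" where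
  "lambda_form n c a = (1 / real n) * (\<Sum>i<n. levi_civita n c a i (n + i))"

text \<open>F = sum_i e^i /\ e^{n+i} (determinant convention for wedge).\<close>
definition Fform :: "nat \<Rightarrow> (nat \<Rightarrow> real) \<Rightarrow> (nat \<Rightarrow> real) \<Rightarrow> real" where
  "Fform n x y = (\<Sum>i<n. x i * y (n + i) - x (n + i) * y i)"

definition dF :: "nat \<Rightarrow> (nat \<Rightarrow> nat \<Rightarrow> nat \<Rightarrow> real) \<Rightarrow> nat \<Rightarrow> nat \<Rightarrow> nat \<Rightarrow> real" where
  "dF n c a b d =
     - Fform n (lie_br (2*n) c (basis_vec a) (basis_vec b)) (basis_vec d)
     + Fform n (lie_br (2*n) c (basis_vec a) (basis_vec d)) (basis_vec b)
     - Fform n (lie_br (2*n) c (basis_vec b) (basis_vec d)) (basis_vec a)"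

text \<open>Component of type (p, 3-p) of a 3-form: p = number of V-indices (< n).\<close>
definition type_part3 :: "nat \<Rightarrow> nat \<Rightarrow> (nat \<Rightarrow> nat \<Rightarrow> nat \<Rightarrow> real) \<Rightarrow> nat \<Rightarrow> nat \<Rightarrow> nat \<Rightarrow> real" where
  "type_part3 n p \<gamma> a b d =
     (if (if a < n then 1 else 0) + (if b < n then 1 else 0) + (if d < n then 1 else (0::nat)) = p
      then \<gamma> a b d else 0)"

definition Lambda_op :: "nat \<Rightarrow> (nat \<Rightarrow> nat \<Rightarrow> nat \<Rightarrow> real) \<Rightarrow> nat \<Rightarrow> real" where
  "Lambda_op n \<gamma> x = - (1 / (real n - 1)) * (\<Sum>i<n. \<gamma> (n + i) i x)"

definition f4 :: "nat \<Rightarrow> (nat \<Rightarrow> nat \<Rightarrow> nat \<Rightarrow> real) \<Rightarrow> nat \<Rightarrow> real" where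
  "f4 n c x = - (1/2) * Lambda_op n (type_part3 n 1 (dF n c)) x"

definition f8 :: "nat \<Rightarrow> (nat \<Rightarrow> nat \<Rightarrow> nat \<Rightarrow> real) \<Rightarrow> nat \<Rightarrow> real" where
  "f8 n c x = - (1/2) * Lambda_op n (type_part3 n 2 (dF n c)) x"

end

theory Submission
  imports Defs "Jordan_Normal_Form.Schur_Decomposition"
begin


definition mtr :: "'a::comm_ring_1 mat \<Rightarrow> 'a" where
  "mtr A = (\<Sum>i<dim_row A. A $$ (i,i))"

lemma mtr_comm:
  assumes A: "A \<in> carrier_mat n m" and B: "B \<in> carrier_mat m n"
  shows "mtr (A * B) = mtr (B * A)"
proof -
  have "mtr (A * B) = (\<Sum>i<n. \<Sum>j<m. A $$ (i,j) * B $$ (j,i))"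
    using A B by (simp add: mtr_def scalar_prod_def atLeast0LessThan)
  also have "\<dots> = (\<Sum>j<m. \<Sum>i<n. B $$ (j,i) * A $$ (i,j))"
    by (subst sum.swap) (simp add: mult.commute)
  also have "\<dots> = mtr (B * A)"
    using A B by (simp add: mtr_def scalar_prod_def atLeast0LessThan)
  finally show ?thesis .
qed

lemma nilp_trace_complex:
  fixes A :: "complex mat"
  assumes A: "A \<in> carrier_mat n n" and nil: "A ^\<^sub>m k = 0\<^sub>m n n"
  shows "mtr A = 0"
proof -
  obtain es where cp: "char_poly A = (\<Prod> a \<leftarrow> es. [:- a, 1:])" and len: "length es = n"
    using char_poly_factorized[OF A] by blast
  have e0: "e = 0" if e: "e \<in> set es" for e
  proof -
    have "poly (char_poly A) e = 0" using e unfolding cp poly_prod_list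
      by (induct es) auto
    hence "eigenvalue A e" using eigenvalue_root_char_poly[OF A] by simp
    then obtain v where ev: "eigenvector A v e" unfolding eigenvalue_def by blast
    have "A ^\<^sub>m k *\<^sub>v v = e^k \<cdot>\<^sub>v v" using eigenvector_pow[OF A ev] .
    moreover have v: "v \<in> carrier_vec n" "v \<noteq> 0\<^sub>v n" using ev A unfolding eigenvector_def by auto
    moreover have "A ^\<^sub>m k *\<^sub>v v = 0\<^sub>v n" using nil v by (intro eq_vecI) (auto simp: scalar_prod_def)
    ultimately have "e^k \<cdot>\<^sub>v v = 0\<^sub>v n" by simp
    moreover obtain i where i: "i < n" "v $ i \<noteq> 0"
    proof -
      have "\<not> (\<forall>i<n. v $ i = 0)"
      proof
        assume "\<forall>i<n. v $ i = 0"
        hence "v = 0\<^sub>v n" using v(1) by (intro eq_vecI) auto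
        thus False using v(2) by simp
      qed
      thus ?thesis using that by blast
    qed
    ultimately have "e^k * v $ i = 0" using i
    proof -
      have "(e^k \<cdot>\<^sub>v v) $ i = (0\<^sub>v n) $ i" using \<open>e^k \<cdot>\<^sub>v v = 0\<^sub>v n\<close> by simp
      thus ?thesis using i v(1) by simp
    qed
    with i have "e^k = 0" by simp
    thus "e = 0" by simp
  qed
  obtain B P Q where sd: "schur_decomposition A es = (B,P,Q)" by (cases "schur_decomposition A es") auto
  from schur_decomposition[OF A cp sd] have sw: "similar_mat_wit A B P Q" and dg: "diag_mat B = es" by auto
  from sw A have BPQ: "B \<in> carrier_mat n n" "P \<in> carrier_mat n n" "Q \<in> carrier_mat n n"
     "Q * P = 1\<^sub>m n" "A = P * B * Q" unfolding similar_mat_wit_def Let_def by auto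
  have "mtr A = mtr (P * (B * Q))" using BPQ by simp
  also have "\<dots> = mtr ((B * Q) * P)" using BPQ by (intro mtr_comm) auto
  also have "\<dots> = mtr B" using BPQ by simp
  also have "\<dots> = 0"
  proof -
    have "B $$ (i,i) = 0" if "i < n" for i
    proof -
      have "B $$ (i,i) = es ! i" using dg[symmetric] that BPQ by (simp add: diag_mat_def)
      thus ?thesis using e0 len that by simp
    qed
    thus ?thesis using BPQ by (simp add: mtr_def)
  qed
  finally show ?thesis .
qed


lemma mult_ind_r[simp]: "(y::real) * (if P then 1 else 0) = (if P then y else 0)" by simp
lemma mult_ind_l[simp]: "(if P then 1 else 0) * (y::real) = (if P then y else 0)" by simp
lemma mult_ind_r2: "(y::real) * (if P then z else 0) = (if P then y * z else 0)" by simp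

lemma lb:
  assumes "a < N" "b < N" "k < N"
  shows "lie_br N c (basis_vec a) (basis_vec b) k = c a b k"
  using assms by (simp add: lie_br_def basis_vec_def if_distrib[of "\<lambda>u. u * _"] sum.delta' cong: if_cong)

lemma slm: assumes "a < 2*n" "d < 2*n"
  shows "slmetric n a d = (if a = (if d < n then d + n else d - n) then 1 else 0)"
  using assms unfolding slmetric_def by auto

lemma gv: assumes "d < 2*n"
  shows "gvec n x (basis_vec d) = x (if d < n then d + n else d - n)"
proof -
  have "gvec n x (basis_vec d) = (\<Sum>a<2*n. x a * slmetric n a d)"
    using assms unfolding gvec_def basis_vec_def by (intro sum.cong refl) (simp add: sum.delta' if_distrib[of "\<lambda>u. u * _"] cong: if_cong)
  also have "\<dots> = (\<Sum>a<2*n. if a = (if d < n then d + n else d - n) then x a else 0)"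
    using assms by (intro sum.cong) (auto simp: slm)
  also have "\<dots> = x (if d < n then d + n else d - n)"
    using assms sum.delta[of "{..<2*n}" "(if d < n then d + n else d - n)" x] by auto
  finally show ?thesis .
qed

lemma Ff: assumes "d < 2*n"
  shows "Fform n x (basis_vec d) = (if d < n then - x (n + d) else x (d - n))"
proof -
  have "Fform n x (basis_vec d) = (\<Sum>i<n. (if i = d - n \<and> n \<le> d then x i else 0)) - (\<Sum>i<n. if i = d then x (n+i) else 0)"
    unfolding Fform_def basis_vec_def sum_subtractf[symmetric]
    by (intro sum.cong) auto
  also have "\<dots> = (if d < n then - x (n + d) else x (d - n))"
    using assms by (auto simp: sum.delta' sum.neutral)
  finally show ?thesis .
qed
definition pr :: "nat \<Rightarrow> nat \<Rightarrow> nat" where "pr n d = (if d < n then d + n else d - n)"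

definition G0 :: "nat \<Rightarrow> (nat \<Rightarrow> nat \<Rightarrow> nat \<Rightarrow> real) \<Rightarrow> nat \<Rightarrow> nat \<Rightarrow> nat \<Rightarrow> real" where
  "G0 n c a b d = (if a < 2*n \<and> b < 2*n \<and> d < 2*n then
     (c a b (pr n d) - c b d (pr n a) + c d a (pr n b)) / 2 else 0)"

lemma prlt: "d < 2*n \<Longrightarrow> pr n d < 2*n" by (auto simp: pr_def)

lemma Cg: assumes "a < 2*n" "b < 2*n" "d < 2*n"
  shows "gvec n (lie_br (2*n) c (basis_vec a) (basis_vec b)) (basis_vec d) = c a b (pr n d)"
  using assms gv[of d n] lb[of a "2*n" b "pr n d" c] prlt[of d n] by (simp add: pr_def)

lemma G0_ok:
  assumes L: "is_lie_algebra (2*n) c"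
  shows "(\<forall>a<2 * n. \<forall>b<2 * n. \<forall>d<2 * n.
        G0 n c a b d - G0 n c b a d = gvec n (lie_br (2 * n) c (basis_vec a) (basis_vec b)) (basis_vec d) \<and>
        G0 n c a b d + G0 n c a d b = 0) \<and>
        (\<forall>a b d. \<not> (a < 2 * n \<and> b < 2 * n \<and> d < 2 * n) \<longrightarrow> G0 n c a b d = 0)"
proof -
  from L have as: "\<And>i j k. i<2*n \<Longrightarrow> j<2*n \<Longrightarrow> k<2*n \<Longrightarrow> c i j k = - c j i k"
    unfolding is_lie_algebra_def by (meson conjunct1[rule_format])
  show ?thesis
  proof (intro conjI allI impI)
    fix a b d assume h: "a < 2*n" "b < 2*n" "d < 2*n"
    show "G0 n c a b d - G0 n c b a d = gvec n (lie_br (2 * n) c (basis_vec a) (basis_vec b)) (basis_vec d)"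
      unfolding Cg[OF h] G0_def using h
        as[of b a "pr n d", OF h(2) h(1) prlt[OF h(3)]] as[of d b "pr n a", OF h(3) h(2) prlt[OF h(1)]]
        as[of a d "pr n b", OF h(1) h(3) prlt[OF h(2)]]
      by (simp add: field_simps)
    show "G0 n c a b d + G0 n c a d b = 0"
      unfolding G0_def using h
        as[of b d "pr n a", OF h(2) h(3) prlt[OF h(1)]] as[of d a "pr n b", OF h(3) h(1) prlt[OF h(2)]]
        as[of a b "pr n d", OF h(1) h(2) prlt[OF h(3)]]
      by (simp add: field_simps)
  qed (auto simp: G0_def)
qed

lemma lc:
  assumes L: "is_lie_algebra (2*n) c"
  shows "levi_civita n c = G0 n c"
  unfolding levi_civita_def
proof (rule the_equality)
  show "(\<forall>a<2 * n. \<forall>b<2 * n. \<forall>d<2 * n.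
        G0 n c a b d - G0 n c b a d = gvec n (lie_br (2 * n) c (basis_vec a) (basis_vec b)) (basis_vec d) \<and>
        G0 n c a b d + G0 n c a d b = 0) \<and>
        (\<forall>a b d. \<not> (a < 2 * n \<and> b < 2 * n \<and> d < 2 * n) \<longrightarrow> G0 n c a b d = 0)" using G0_ok[OF L] .
next
  fix \<Gamma> assume H: "(\<forall>a<2 * n. \<forall>b<2 * n. \<forall>d<2 * n.
        \<Gamma> a b d - \<Gamma> b a d = gvec n (lie_br (2 * n) c (basis_vec a) (basis_vec b)) (basis_vec d) \<and>
        \<Gamma> a b d + \<Gamma> a d b = 0) \<and>
        (\<forall>a b d. \<not> (a < 2 * n \<and> b < 2 * n \<and> d < 2 * n) \<longrightarrow> \<Gamma> a b d = 0)"
  define D where "D a b d = \<Gamma> a b d - G0 n c a b d" for a b d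
  have G0p: "(\<forall>a<2 * n. \<forall>b<2 * n. \<forall>d<2 * n.
        G0 n c a b d - G0 n c b a d = gvec n (lie_br (2 * n) c (basis_vec a) (basis_vec b)) (basis_vec d) \<and>
        G0 n c a b d + G0 n c a d b = 0)" using conjunct1[OF G0_ok[OF L]] .
  have s1: "D a b d = D b a d" if "a<2*n" "b<2*n" "d<2*n" for a b d
  proof -
    have "\<Gamma> a b d - \<Gamma> b a d = gvec n (lie_br (2 * n) c (basis_vec a) (basis_vec b)) (basis_vec d)"
      using conjunct1[OF conjunct1[OF H, rule_format, OF that]] .
    moreover have "G0 n c a b d - G0 n c b a d = gvec n (lie_br (2 * n) c (basis_vec a) (basis_vec b)) (basis_vec d)"
      using conjunct1[OF G0p[rule_format, OF that]] .
    ultimately show ?thesis unfolding D_def by linarith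
  qed
  have s2: "D a b d = - D a d b" if "a<2*n" "b<2*n" "d<2*n" for a b d
  proof -
    have "\<Gamma> a b d + \<Gamma> a d b = 0"
      using conjunct2[OF conjunct1[OF H, rule_format, OF that]] .
    moreover have "G0 n c a b d + G0 n c a d b = 0"
      using conjunct2[OF G0p[rule_format, OF that]] .
    ultimately show ?thesis unfolding D_def by linarith
  qed
  have "D a b d = 0" if "a<2*n" "b<2*n" "d<2*n" for a b d
  proof -
    have "D a b d = - D a d b" using s2[of a b d] that by simp
    also have "\<dots> = - D d a b" using s1[of a d b] that by simp
    also have "\<dots> = D d b a" using s2[of d a b] that by simp
    also have "\<dots> = D b d a" using s1[of d b a] that by simp
    also have "\<dots> = - D b a d" using s2[of b d a] that by simp
    also have "\<dots> = - D a b d" using s1[of b a d] that by simp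
    finally show ?thesis by simp
  qed
  hence Z: "\<Gamma> a b d = G0 n c a b d" if "a<2*n" "b<2*n" "d<2*n" for a b d
  proof -
    have "D a b d = 0" using that by fact
    thus ?thesis unfolding D_def by simp
  qed
  show "\<Gamma> = G0 n c"
  proof (intro ext)
    fix a b d
    show "\<Gamma> a b d = G0 n c a b d"
    proof (cases "a<2*n \<and> b<2*n \<and> d<2*n")
      case True thus ?thesis using Z by blast
    next
      case False
      hence "\<Gamma> a b d = 0" using conjunct2[OF H] by blast
      thus ?thesis using False unfolding G0_def by auto
    qed
  qed
qed


lemma nilp_trace_fun:
  fixes M :: "nat \<Rightarrow> nat \<Rightarrow> real" and n k :: nat and app :: "(nat \<Rightarrow> real) \<Rightarrow> nat \<Rightarrow> real"
  assumes app_def: "app = (\<lambda>x i. \<Sum>j<n. M i j * x j)"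
  assumes nil: "\<And>x. (\<forall>j\<ge>n. x j = 0) \<Longrightarrow> \<forall>i<n. (app ^^ k) x i = 0"
  shows "(\<Sum>i<n. M i i) = 0"
proof -
  define A where "A = mat n n (\<lambda>(i,j). M i j)"
  have A: "A \<in> carrier_mat n n" unfolding A_def by simp
  have Av: "A *\<^sub>v vec n x = vec n (app x)" for x
    unfolding A_def app_def by (intro eq_vecI) (auto simp: scalar_prod_def atLeast0LessThan intro!: sum.cong)
  have Ap: "A ^\<^sub>m p *\<^sub>v vec n x = vec n ((app ^^ p) x)" for p x
  proof (induct p arbitrary: x)
    case 0 have "dim_row A = n" using A by simp
    thus ?case by simp
  next
    case (Suc p)
    have "A ^\<^sub>m Suc p *\<^sub>v vec n x = (A ^\<^sub>m p * A) *\<^sub>v vec n x" by simp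
    also have "\<dots> = A ^\<^sub>m p *\<^sub>v (A *\<^sub>v vec n x)"
      using A by (intro assoc_mult_mat_vec) auto
    also have "\<dots> = vec n ((app ^^ p) (app x))" unfolding Av Suc ..
    also have "\<dots> = vec n ((app ^^ Suc p) x)" by (simp add: funpow_Suc_right del: funpow.simps)
    finally show ?case .
  qed
  have Ak: "A ^\<^sub>m k = 0\<^sub>m n n"
  proof (rule eq_matI)
    fix i j assume ij: "i < dim_row (0\<^sub>m n n :: real mat)" "j < dim_col (0\<^sub>m n n :: real mat)"
    define u where "u = (\<lambda>l. if l = j then 1 else (0::real))"
    have B: "A ^\<^sub>m k \<in> carrier_mat n n" using pow_carrier_mat[OF A, of k] .
    have "(A ^\<^sub>m k *\<^sub>v vec n u) $ i = (\<Sum>l\<in>{0..<n}. (A ^\<^sub>m k) $$ (i,l) * u l)"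
    proof -
      have d: "dim_row (A ^\<^sub>m k) = n" "dim_col (A ^\<^sub>m k) = n" "dim_row A = n" "dim_col A = n" using B A by auto
      show ?thesis using ij by (subst index_mult_mat_vec) (auto simp: d scalar_prod_def)
    qed
    also have "\<dots> = (\<Sum>l\<in>{0..<n}. if l = j then (A ^\<^sub>m k) $$ (i,l) else 0)"
      unfolding u_def by (intro sum.cong) auto
    also have "\<dots> = (A ^\<^sub>m k) $$ (i,j)" using ij by (simp add: sum.delta')
    finally have "(A ^\<^sub>m k *\<^sub>v vec n u) $ i = (A ^\<^sub>m k) $$ (i,j)" .
    moreover have "(A ^\<^sub>m k *\<^sub>v vec n u) $ i = 0"
      unfolding Ap using ij nil[of u] by (auto simp: u_def)
    ultimately show "(A ^\<^sub>m k) $$ (i,j) = (0\<^sub>m n n :: real mat) $$ (i,j)" using ij by simp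
  qed (use pow_carrier_mat[OF A, of k] in auto)
  define Ac where "Ac = map_mat complex_of_real A"
  have Ac: "Ac \<in> carrier_mat n n" using A unfolding Ac_def by simp
  have "Ac ^\<^sub>m k = map_mat complex_of_real (A ^\<^sub>m k)"
    unfolding Ac_def by (rule of_real_hom.mat_hom_pow[OF A, symmetric])
  also have "\<dots> = 0\<^sub>m n n" unfolding Ak by (intro eq_matI) auto
  finally have "mtr Ac = 0" using nilp_trace_complex[OF Ac] by blast
  moreover have "mtr Ac = complex_of_real (\<Sum>i<n. M i i)"
    unfolding mtr_def Ac_def A_def by simp
  ultimately show ?thesis by (metis of_real_eq_0_iff)
qed


lemma adb: assumes "a < N" "k < N"
  shows "lie_br N c (basis_vec a) y k = (\<Sum>j<N. y j * c a j k)"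
proof -
  have "lie_br N c (basis_vec a) y k = (\<Sum>i<N. if i = a then (\<Sum>j<N. y j * c a j k) else 0)"
    using assms unfolding lie_br_def by (intro if_P[THEN trans] sum.cong refl) (auto simp: basis_vec_def)
  also have "\<dots> = (\<Sum>j<N. y j * c a j k)" using assms sum.delta[of "{..<N}" a "\<lambda>_. (\<Sum>j<N. y j * c a j k)"] by simp
  finally show ?thesis .
qed

lemma sum_split: "(\<Sum>j<m+n. (f::nat\<Rightarrow>real) j) = (\<Sum>j<m. f j) + (\<Sum>j<n. f (m+j)::real)"
  by (induct n) (auto simp: add.commute)

lemma iter_rep: "iter_br N c (replicate p e @ [y]) = (lie_br N c e ^^ p) y"
proof (induct p)
  case 0 show ?case by simp
next
  case (Suc p)
  obtain z zs where zz: "replicate p e @ [y] = z # zs" by (cases "replicate p e @ [y]") auto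
  have "iter_br N c (replicate (Suc p) e @ [y]) = iter_br N c (e # z # zs)" using zz by simp
  also have "\<dots> = lie_br N c e (iter_br N c (z # zs))" by simp
  also have "\<dots> = (lie_br N c e ^^ Suc p) y" using Suc zz by simp
  finally show ?case .
qed

lemma nil_ad:
  assumes nil: "nilpotent_lie N c" and a: "a < N"
  obtains m where "\<And>y. (\<forall>k\<ge>N. y k = 0) \<Longrightarrow> \<forall>k<N. (lie_br N c (basis_vec a) ^^ m) y k = 0"
proof -
  from nil obtain m where m: "m \<ge> 1" and H: "\<forall>xs. length xs = m \<and> (\<forall>x\<in>set xs. \<forall>k\<ge>N. x k = 0)
        \<longrightarrow> (\<forall>k<N. iter_br N c xs k = 0)" unfolding nilpotent_lie_def by blast
  have "\<forall>k<N. (lie_br N c (basis_vec a) ^^ (m-1)) y k = 0" if y: "\<forall>k\<ge>N. y k = 0" for y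
  proof -
    have "\<forall>k<N. iter_br N c (replicate (m-1) (basis_vec a) @ [y]) k = 0"
      using H[rule_format, of "replicate (m-1) (basis_vec a) @ [y]"] m y a
      by (auto simp: basis_vec_def)
    thus ?thesis unfolding iter_rep .
  qed
  thus ?thesis using that by blast
qed

lemma trV:
  assumes P: "paracomplex_sc n c" and nil: "nilpotent_lie (2*n) c" and a: "a < n"
  shows "(\<Sum>i<n. c a (n+i) (n+i)) = 0"
proof -
  define ad where "ad = lie_br (2*n) c (basis_vec a)"
  define app where "app = (\<lambda>(x::nat\<Rightarrow>real) i. \<Sum>j<n. c a (n+j) (n+i) * x j)"
  obtain m where m: "\<And>y. (\<forall>k\<ge>2*n. y k = 0) \<Longrightarrow> \<forall>k<2*n. (ad ^^ m) y k = 0"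
    using nil_ad[OF nil, of a] a unfolding ad_def by force
  have claim: "\<forall>i<n. (ad ^^ p) y (n+i) = (app ^^ p) (\<lambda>j. y (n+j)) i" for p y
  proof (induct p)
    case 0 show ?case by simp
  next
    case (Suc p)
    show ?case
    proof (intro allI impI)
      fix i assume i: "i < n"
      let ?z = "(ad ^^ p) y"
      have "(ad ^^ Suc p) y (n+i) = ad ?z (n+i)" by simp
      also have "\<dots> = (\<Sum>j<n+n. ?z j * c a j (n+i))" unfolding ad_def using a i
        by (subst adb) (auto simp: mult_2)
      also have "\<dots> = (\<Sum>j<n. ?z j * c a j (n+i)) + (\<Sum>j<n. ?z (n+j) * c a (n+j) (n+i))"
        by (rule sum_split)
      also have "(\<Sum>j<n. ?z j * c a j (n+i)) = 0"
        using P a i unfolding paracomplex_sc_def by (intro sum.neutral) auto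
      also have "(\<Sum>j<n. ?z (n+j) * c a (n+j) (n+i)) = (\<Sum>j<n. (app ^^ p) (\<lambda>j. y (n+j)) j * c a (n+j) (n+i))"
        using Suc by (intro sum.cong) auto
      also have "0 + (\<Sum>j<n. (app ^^ p) (\<lambda>j. y (n+j)) j * c a (n+j) (n+i)) = (app ^^ Suc p) (\<lambda>j. y (n+j)) i"
        unfolding app_def by (simp add: mult.commute)
      finally show "(ad ^^ Suc p) y (n+i) = (app ^^ Suc p) (\<lambda>j. y (n+j)) i" .
    qed
  qed
  have "(\<Sum>i<n. c a (n+i) (n+i)) = 0"
  proof (rule nilp_trace_fun[OF app_def, where k = m])
    fix x :: "nat \<Rightarrow> real" assume x: "\<forall>j\<ge>n. x j = 0"
    define X where "X = (\<lambda>k. if n \<le> k \<and> k < 2*n then x (k-n) else 0)"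
    have XX: "(\<lambda>j. X (n+j)) = x" unfolding X_def using x by (auto simp: fun_eq_iff)
    have "\<forall>k<2*n. (ad ^^ m) X k = 0" using m[of X] unfolding X_def by auto
    thus "\<forall>i<n. (app ^^ m) x i = 0" using claim[of m X] unfolding XX by auto
  qed
  thus ?thesis .
qed

lemma trH:
  assumes P: "paracomplex_sc n c" and nil: "nilpotent_lie (2*n) c" and a: "n \<le> a" "a < 2*n"
  shows "(\<Sum>i<n. c a i i) = 0"
proof -
  define ad where "ad = lie_br (2*n) c (basis_vec a)"
  define app where "app = (\<lambda>(x::nat\<Rightarrow>real) i. \<Sum>j<n. c a j i * x j)"
  obtain m where m: "\<And>y. (\<forall>k\<ge>2*n. y k = 0) \<Longrightarrow> \<forall>k<2*n. (ad ^^ m) y k = 0"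
    using nil_ad[OF nil, of a] a unfolding ad_def by force
  have claim: "\<forall>i<n. (ad ^^ p) y i = (app ^^ p) y i" for p y
  proof (induct p)
    case 0 show ?case by simp
  next
    case (Suc p)
    show ?case
    proof (intro allI impI)
      fix i assume i: "i < n"
      let ?z = "(ad ^^ p) y"
      have "(ad ^^ Suc p) y i = ad ?z i" by simp
      also have "\<dots> = (\<Sum>j<n+n. ?z j * c a j i)" unfolding ad_def using a i
        by (subst adb) (auto simp: mult_2)
      also have "\<dots> = (\<Sum>j<n. ?z j * c a j i) + (\<Sum>j<n. ?z (n+j) * c a (n+j) i)"
        by (rule sum_split)
      also have "(\<Sum>j<n. ?z (n+j) * c a (n+j) i) = 0"
        using P a i unfolding paracomplex_sc_def by (intro sum.neutral) auto
      also have "(\<Sum>j<n. ?z j * c a j i) = (\<Sum>j<n. (app ^^ p) y j * c a j i)"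
        using Suc by (intro sum.cong) auto
      also have "(\<Sum>j<n. (app ^^ p) y j * c a j i) + 0 = (app ^^ Suc p) y i"
        unfolding app_def by (simp add: mult.commute)
      finally show "(ad ^^ Suc p) y i = (app ^^ Suc p) y i" .
    qed
  qed
  have "(\<Sum>i<n. c a i i) = 0"
  proof (rule nilp_trace_fun[OF app_def, where k = m])
    fix x :: "nat \<Rightarrow> real" assume x: "\<forall>j\<ge>n. x j = 0"
    have "\<forall>k<2*n. (ad ^^ m) x k = 0" using m[of x] x by auto
    thus "\<forall>i<n. (app ^^ m) x i = 0" using claim[of m x] by auto
  qed
  thus ?thesis .
qed


lemma lbv: assumes "a < 2*n" "b < 2*n"
  shows "lie_br (2*n) c (basis_vec a) (basis_vec b) k = (if k < 2*n then c a b k else 0)"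
  using lb[of a "2*n" b k c] assms by (auto simp: lie_br_def)

lemma dFv: assumes i: "i < n" and a: "a < 2*n"
  shows "dF n c (n+i) i a = (if a < n then c (n+i) i (n+a) else - c (n+i) i (a-n)) - c (n+i) a (n+i) - c i a i"
  using i a unfolding dF_def by (auto simp: Ff lbv)

theorem lemma8p1:
  fixes n :: nat and c :: "nat \<Rightarrow> nat \<Rightarrow> nat \<Rightarrow> real"
  assumes "n \<ge> 2"
    and "is_lie_algebra (2*n) c"
    and "nilpotent_lie (2*n) c"
    and "paracomplex_sc n c"
  shows "\<forall>a<2*n. lambda_form n c a = ((real n - 1) / real n) * (f8 n c a - f4 n c a)"
proof (intro allI impI)
  fix a assume a: "a < 2*n"
  have n1: "real n - 1 \<noteq> 0" "real n \<noteq> 0" using assms(1) by auto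
  from assms(2) have as: "\<And>i j k. i<2*n \<Longrightarrow> j<2*n \<Longrightarrow> k<2*n \<Longrightarrow> c i j k = - c j i k"
    unfolding is_lie_algebra_def by (meson conjunct1[rule_format])
  have lam: "lambda_form n c a = (1 / real n) * (\<Sum>i<n. (c a i i - c i (n+i) (pr n a) + c (n+i) a (n+i)) / 2)"
    unfolding lambda_form_def lc[OF assms(2)] using a by (intro arg_cong[where f="\<lambda>x. _ * x"] sum.cong) (auto simp: G0_def pr_def add.commute)
  show "lambda_form n c a = ((real n - 1) / real n) * (f8 n c a - f4 n c a)"
  proof (cases "a < n")
    case True
    define S1 where "S1 = (\<Sum>i<n. c i a i)"
    define S2 where "S2 = (\<Sum>i<n. c (n+i) i (n+a))"
    define S3 where "S3 = (\<Sum>i<n. c a (n+i) (n+i))"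
    have S3: "S3 = 0" unfolding S3_def using trV[OF assms(4) assms(3) True] .
    have "(\<Sum>i<n. (c a i i - c i (n+i) (pr n a) + c (n+i) a (n+i)) / 2)
       = (\<Sum>i<n. (- c i a i + c (n+i) i (n+a) - c a (n+i) (n+i)) / 2)"
    proof (rule sum.cong[OF refl])
      fix i assume "i \<in> {..<n}" hence i: "i < n" by simp
      have "c a i i = - c i a i" "c i (n+i) (n+a) = - c (n+i) i (n+a)" "c (n+i) a (n+i) = - c a (n+i) (n+i)"
        using i True as[of a i i] as[of i "n+i" "n+a"] as[of "n+i" a "n+i"] by auto
      thus "(c a i i - c i (n+i) (pr n a) + c (n+i) a (n+i)) / 2 = (- c i a i + c (n+i) i (n+a) - c a (n+i) (n+i)) / 2"
        using True by (simp add: pr_def add.commute)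
    qed
    also have "\<dots> = (- S1 + S2 - S3) / 2"
      unfolding S1_def S2_def S3_def by (simp add: sum_divide_distrib[symmetric] sum.distrib sum_subtractf sum_negf)
    finally have X: "(\<Sum>i<n. (c a i i - c i (n+i) (pr n a) + c (n+i) a (n+i)) / 2) = (- S1 + S2 - S3) / 2" .
    have L: "lambda_form n c a = (1 / real n) * ((- S1 + S2 - S3) / 2)" by (simp only: lam X)
    have f4: "f4 n c a = 0" unfolding f4_def Lambda_op_def type_part3_def using True by simp
    have "f8 n c a = (1 / (2 * (real n - 1))) * (\<Sum>i<n. dF n c (n+i) i a)"
      unfolding f8_def Lambda_op_def type_part3_def using True by simp
    also have "(\<Sum>i<n. dF n c (n+i) i a) = S2 + S3 - S1"
    proof -
      have "(\<Sum>i<n. dF n c (n+i) i a) = (\<Sum>i<n. c (n+i) i (n+a) + c a (n+i) (n+i) - c i a i)"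
      proof (rule sum.cong[OF refl])
        fix i assume "i \<in> {..<n}" hence i: "i < n" by simp
        have "c (n+i) a (n+i) = - c a (n+i) (n+i)" using i True as[of "n+i" a "n+i"] by auto
        thus "dF n c (n+i) i a = c (n+i) i (n+a) + c a (n+i) (n+i) - c i a i"
          using i True a by (simp add: dFv)
      qed
      thus ?thesis unfolding S1_def S2_def S3_def by (simp add: sum.distrib sum_subtractf)
    qed
    finally have f8: "f8 n c a = (1 / (2 * (real n - 1))) * (S2 + S3 - S1)" .
    show ?thesis unfolding L f4 f8 S3 using n1 by (simp add: field_simps)
  next
    case False
    define T1 where "T1 = (\<Sum>i<n. c a i i)"
    define T2 where "T2 = (\<Sum>i<n. c (n+i) i (a-n))"
    define T3 where "T3 = (\<Sum>i<n. c (n+i) a (n+i))"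
    have T1: "T1 = 0" unfolding T1_def using trH[OF assms(4) assms(3)] False a by simp
    have "(\<Sum>i<n. (c a i i - c i (n+i) (pr n a) + c (n+i) a (n+i)) / 2)
       = (\<Sum>i<n. (c a i i + c (n+i) i (a-n) + c (n+i) a (n+i)) / 2)"
    proof (rule sum.cong[OF refl])
      fix i assume "i \<in> {..<n}" hence i: "i < n" by simp
      have "c i (n+i) (a-n) = - c (n+i) i (a-n)"
        using i a as[of i "n+i" "a-n"] by auto
      thus "(c a i i - c i (n+i) (pr n a) + c (n+i) a (n+i)) / 2 = (c a i i + c (n+i) i (a-n) + c (n+i) a (n+i)) / 2"
        using False by (simp add: pr_def)
    qed
    also have "\<dots> = (T1 + T2 + T3) / 2"
      unfolding T1_def T2_def T3_def by (simp add: sum_divide_distrib[symmetric] sum.distrib)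
    finally have X: "(\<Sum>i<n. (c a i i - c i (n+i) (pr n a) + c (n+i) a (n+i)) / 2) = (T1 + T2 + T3) / 2" .
    have L: "lambda_form n c a = (1 / real n) * ((T1 + T2 + T3) / 2)" by (simp only: lam X)
    have f8: "f8 n c a = 0" unfolding f8_def Lambda_op_def type_part3_def using False by simp
    have "f4 n c a = (1 / (2 * (real n - 1))) * (\<Sum>i<n. dF n c (n+i) i a)"
      unfolding f4_def Lambda_op_def type_part3_def using False by simp
    also have "(\<Sum>i<n. dF n c (n+i) i a) = - T2 - T3 + T1"
    proof -
      have "(\<Sum>i<n. dF n c (n+i) i a) = (\<Sum>i<n. - c (n+i) i (a-n) - c (n+i) a (n+i) + c a i i)"
      proof (rule sum.cong[OF refl])
        fix i assume "i \<in> {..<n}" hence i: "i < n" by simp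
        have "c i a i = - c a i i" using i a as[of i a i] by auto
        thus "dF n c (n+i) i a = - c (n+i) i (a-n) - c (n+i) a (n+i) + c a i i"
          using i False a by (simp add: dFv)
      qed
      thus ?thesis unfolding T1_def T2_def T3_def by (simp add: sum.distrib sum_subtractf sum_negf)
    qed
    finally have f4: "f4 n c a = (1 / (2 * (real n - 1))) * (- T2 - T3 + T1)" .
    show ?thesis unfolding L f4 f8 T1 using n1 by (simp add: field_simps)
  qed
qed
end
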